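(* Let $\mathcal N\subseteq\mathcal X^2$ be a symmetric neighbor relation, $Q$ a probability measure on $\mathcal Z$, and $P_{Z|X}$ a Markov kernel with $P_{Z|X}(\cdot|x)\ll Q$ for all $x$. If $P_{Z|X}$ is $\varepsilon$-DP with respect to $\mathcal N$, then for every $\alpha>1$ the PPR-compressed mechanism $x\mapsto((Z_i)_{i\ge1},K)$ is $2\alpha\varepsilon$-DP with respect to $\mathcal N$; i.e., for all $(x,x')\in\mathcal N$ and all measurable $\mathcal S\subseteq\mathcal Z^{\infty}\times\mathbb Z_{>0}$, $\Pr(((Z_i)_i,K)\in\mathcal S\mid X=x)\le e^{2\alpha\varepsilon}\Pr(((Z_i)_i,K)\in\mathcal S\mid X=x')$.
   Context: A Markov kernel $P_{W|X}$ is $(\varepsilon,\delta)$-DP w.r.t. a symmetric relation $\mathcal N\subseteq\mathcal X^2$ if $\Pr(W\in S\mid X=x)\le e^{\varepsilon}\Pr(W\in S\mid X=x')+\delta$ for all $(x,x')\in\mathcal N$ and measurable $S$; $\varepsilon$-DP means $(\varepsilon,0)$-DP. PPR: let $Z_1,Z_2,\ldots$ be i.i.d. $\sim Q$, independent of the points $T_1\le T_2\le\cdots$ of a rate-$1$ Poisson process on $[0,\infty)$. For input $x$, with $P=P_{Z|X}(\cdot|x)$, set $\tilde T_i:=T_i(\frac{\mathrm dP}{\mathrm dQ}(Z_i))^{-1}$ ($:=\infty$ if the derivative is $0$, $\infty^{-\alpha}:=0$), and draw $K$ with $\Pr(K=k\mid (Z_i,T_i)_i)=\tilde T_k^{-\alpha}/\sum_i\tilde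 T_i^{-\alpha}$ (fresh randomness for each input). The PPR-compressed mechanism is the kernel $x\mapsto((Z_i)_{i\ge1},K)$; the shared sequence $(Z_i)$ does not depend on $x$. *)

theory Defs
  imports "HOL-Probability.Probability"
begin

definition dp_mech :: "('x \<times> 'x) set \<Rightarrow> ('x \<Rightarrow> 'a measure) \<Rightarrow> real \<Rightarrow> real \<Rightarrow> bool" where
  "dp_mech N M \<epsilon> \<delta> \<longleftrightarrow>
     (\<forall>(x, x') \<in> N. \<forall>S \<in> sets (M x).
        emeasure (M x) S \<le> ennreal (exp \<epsilon>) * emeasure (M x') S + ennreal \<delta>)"

definition exp1 :: "real measure" where
  "exp1 = density lborel (\<lambda>t. ennreal (exponential_density 1 t))"

text \<open>Points of the rate-1 Poisson process on [0,inf): T_i = E_0 + ... + E_i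
  with E_j i.i.d. Exp(1) (0-based indexing).\<close>
definition ppr_T :: "(nat \<Rightarrow> real) \<Rightarrow> nat \<Rightarrow> real" where
  "ppr_T e i = (\<Sum>j\<le>i. e j)"

text \<open>The weight  Ttilde_i^(-alpha) = (f(Z_i) / T_i)^alpha, where f = dP/dQ
  (this is 0 when f(Z_i) = 0, matching Ttilde_i = inf).\<close>
definition ppr_weight :: "('z \<Rightarrow> ennreal) \<Rightarrow> real \<Rightarrow> (nat \<Rightarrow> 'z) \<Rightarrow> (nat \<Rightarrow> real) \<Rightarrow> nat \<Rightarrow> real" where
  "ppr_weight f \<alpha> z e k = (enn2real (f (z k)) / ppr_T e k) powr \<alpha>"

text \<open>Law of the PPR-compressed output ((Z_i)_i, K): (Z_i) i.i.d. Q, Poisson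
  arrivals independent of them, and K drawn with probability
  weight_k / (sum_i weight_i) given everything else.\<close>
definition ppr_mech :: "'z measure \<Rightarrow> ('z \<Rightarrow> ennreal) \<Rightarrow> real \<Rightarrow> ((nat \<Rightarrow> 'z) \<times> nat) measure" where
  "ppr_mech Q f \<alpha> =
     distr
       (density (PiM UNIV (\<lambda>_. Q) \<Otimes>\<^sub>M (PiM UNIV (\<lambda>_. exp1) \<Otimes>\<^sub>M count_space UNIV))
          (\<lambda>(z, e, k). ennreal (ppr_weight f \<alpha> z e k) / (\<Sum>i. ennreal (ppr_weight f \<alpha> z e i))))
       (PiM UNIV (\<lambda>_. Q) \<Otimes>\<^sub>M count_space UNIV)
       (\<lambda>(z, e, k). (z, k))"

end

theory Submission
  imports Defs
begin

lemma AE_le_of_int_le: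
  assumes f: "f \<in> borel_measurable M" and g: "g \<in> borel_measurable M"
    and le: "\<And>A. A \<in> sets M \<Longrightarrow> (\<integral>\<^sup>+x. f x * indicator A x \<partial>M) \<le> (\<integral>\<^sup>+x. g x * indicator A x \<partial>M)"
    and fin: "integral\<^sup>N M g \<noteq> \<infinity>"
  shows "AE x in M. f x \<le> g x"
proof -
  let ?P = "\<lambda>f A. \<integral>\<^sup>+ x. f x * indicator A x \<partial>M"
  let ?N = "{x\<in>space M. g x < f x}"
  have N: "?N \<in> sets M" using f g by simp
  have "?P g ?N \<le> integral\<^sup>N M g"
    by (intro nn_integral_mono_AE) (auto split: split_indicator)
  then have Pg_fin: "?P g ?N \<noteq> \<infinity>" using fin by (auto simp: top_unique)
  have "?P (\<lambda>x. (f x - g x)) ?N = (\<integral>\<^sup>+x. f x * indicator ?N x - g x * indicator ?N x \<partial>M)"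
    by (auto intro!: nn_integral_cong simp: indicator_def)
  also have "\<dots> = ?P f ?N - ?P g ?N"
  proof (rule nn_integral_diff)
    show "(\<lambda>x. f x * indicator ?N x) \<in> borel_measurable M" "(\<lambda>x. g x * indicator ?N x) \<in> borel_measurable M"
      using f g N by auto
    show "AE x in M. g x * indicator ?N x \<le> f x * indicator ?N x"
      by (auto split: split_indicator)
  qed fact
  also have "\<dots> = 0"
    using le[OF N] Pg_fin by (simp add: diff_eq_0_iff_ennreal less_top[symmetric]) (metis top_unique)
  finally show "AE x in M. f x \<le> g x"
    using f g nn_integral_PInf_AE[OF g fin]
    by (subst (asm) nn_integral_0_iff_AE)
       (auto split: split_indicator simp: not_less ennreal_minus_eq_0)
qed

lemma ratio_le:
  fixes a b :: "nat \<Rightarrow> real" and c :: real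
  assumes c: "c > 0" and a0: "\<And>i. 0 \<le> a i" and b0: "\<And>i. 0 \<le> b i"
    and ab: "\<And>i. a i \<le> c * b i" and ba: "\<And>i. b i \<le> c * a i"
  shows "ennreal (a k) / (\<Sum>i. ennreal (a i)) \<le> ennreal (c * c) * (ennreal (b k) / (\<Sum>i. ennreal (b i)))"
proof -
  let ?A = "\<Sum>i. ennreal (a i)" and ?B = "\<Sum>i. ennreal (b i)"
  have sa: "?A \<le> ennreal c * ?B"
  proof -
    have "?A \<le> (\<Sum>i. ennreal (c * b i))"
      using ab by (intro suminf_le) (auto intro: ennreal_leI)
    then show ?thesis using c a0 b0 by (simp add: ennreal_mult)
  qed
  have sb: "?B \<le> ennreal c * ?A"
  proof -
    have "?B \<le> (\<Sum>i. ennreal (c * a i))"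
      using ba by (intro suminf_le) (auto intro: ennreal_leI)
    then show ?thesis using c a0 b0 by (simp add: ennreal_mult)
  qed
  have ak: "ennreal (a k) \<le> ?A"
  proof -
    have "ennreal (a k) \<le> (\<Sum>i<Suc k. ennreal (a i))" by (rule member_le_sum) auto
    also have "\<dots> \<le> ?A" by (rule sum_le_suminf) auto
    finally show ?thesis .
  qed
  show ?thesis
  proof (cases "?A = 0 \<or> ?A = top")
    case True
    then show ?thesis using ak by (auto simp: ennreal_divide_top)
  next
    case False
    then have Apos: "0 < ?A" and Afin: "?A < top" by (auto simp: less_top zero_less_iff_neq_zero)
    have Bpos: "?B \<noteq> 0" using sa Apos by (auto simp: zero_less_iff_neq_zero)
    have Bfin: "?B < top" using sb Afin c by (auto simp: ennreal_mult_less_top less_top[symmetric] top_unique ennreal_mult_eq_top_iff)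
    obtain sA where sA: "?A = ennreal sA" "0 < sA" using Apos Afin
      by (cases ?A) (auto)
    obtain sB where sB: "?B = ennreal sB" "0 < sB" using Bpos Bfin
      by (cases ?B) (auto simp: zero_less_iff_neq_zero)
    have r1: "sA \<le> c * sB" using sa sA sB c by (simp add: ennreal_mult[symmetric])
    have r2: "sB \<le> c * sA" using sb sA sB c by (simp add: ennreal_mult[symmetric])
    have key: "a k / sA \<le> c * c * (b k / sB)"
    proof -
      have "a k / sA \<le> (c * b k) / sA" using ab[of k] sA by (simp add: divide_right_mono)
      also have "\<dots> \<le> (c * b k) / (sB / c)"
        using r2 sA sB c b0[of k] by (intro divide_left_mono) (auto simp: field_simps)
      also have "\<dots> = c * c * (b k / sB)" using c sB by (simp add: field_simps)
      finally show ?thesis .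
    qed
    show ?thesis using key sA sB a0[of k] b0[of k] c
      by (simp add: divide_ennreal ennreal_mult[symmetric] ennreal_leI)
  qed
qed

lemma weight_le:
  fixes T u v C \<alpha> :: real
  assumes "0 \<le> T" "0 \<le> u" "0 \<le> v" "u \<le> C * v" "0 < C" "0 \<le> \<alpha>"
  shows "(u / T) powr \<alpha> \<le> C powr \<alpha> * (v / T) powr \<alpha>"
proof -
  have q: "u / T \<le> C * (v / T)"
  proof -
    have "u / T \<le> (C * v) / T" using assms(1,4) by (rule divide_right_mono[rotated])
    then show ?thesis by simp
  qed
  have "(u / T) powr \<alpha> \<le> (C * (v / T)) powr \<alpha>"
    by (rule powr_mono2[OF assms(6) _ q]) (use assms(1,2) in simp)
  also have "\<dots> = C powr \<alpha> * (v / T) powr \<alpha>"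
    by (rule powr_mult)
  finally show ?thesis .
qed

lemma AE_PiM_all:
  assumes M: "prob_space M" and G: "AE z in M. G z"
  shows "AE \<omega> in PiM UNIV (\<lambda>_::nat. M). \<forall>i. G (\<omega> i)"
proof -
  interpret PP: product_prob_space "\<lambda>_::nat. M" UNIV
    by (rule product_prob_spaceI) (rule M)
  show ?thesis unfolding AE_all_countable
  proof
    fix i :: nat
    have e: "distr (PiM UNIV (\<lambda>_::nat. M)) M (\<lambda>\<omega>. \<omega> i) = M"
      using PP.PiM_component[of i] by simp
    have "AE z in distr (PiM UNIV (\<lambda>_::nat. M)) M (\<lambda>\<omega>. \<omega> i). G z"
      unfolding e by (rule G)
    then show "AE \<omega> in PiM UNIV (\<lambda>_::nat. M). G (\<omega> i)"
      by (rule AE_distrD[rotated]) simp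
  qed
qed

lemma AE_pair_fst:
  assumes M2: "sigma_finite_measure M2" and G: "AE x in M1. G x"
  shows "AE y in M1 \<Otimes>\<^sub>M M2. G (fst y)"
proof -
  interpret M2: sigma_finite_measure M2 by fact
  from G obtain N0 where N0: "{x\<in>space M1. \<not> G x} \<subseteq> N0" "emeasure M1 N0 = 0" "N0 \<in> sets M1"
    by (auto elim!: AE_E)
  have "N0 \<times> space M2 \<in> null_sets (M1 \<Otimes>\<^sub>M M2)"
    using N0 by (intro M2.times_in_null_sets1) auto
  then show ?thesis
    by (rule AE_I') (use N0 in \<open>auto simp: space_pair_measure\<close>)
qed

lemma AE_pair_snd:
  assumes M2: "sigma_finite_measure M2" and G: "AE x in M2. G x"
  shows "AE y in M1 \<Otimes>\<^sub>M M2. G (snd y)"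
proof -
  interpret M2: sigma_finite_measure M2 by fact
  from G obtain N0 where N0: "{x\<in>space M2. \<not> G x} \<subseteq> N0" "emeasure M2 N0 = 0" "N0 \<in> sets M2"
    by (auto elim!: AE_E)
  have "space M1 \<times> N0 \<in> null_sets (M1 \<Otimes>\<^sub>M M2)"
    using N0 by (intro M2.times_in_null_sets2) auto
  then show ?thesis
    by (rule AE_I') (use N0 in \<open>auto simp: space_pair_measure\<close>)
qed

lemma exp1_prob: "prob_space exp1"
  unfolding exp1_def using prob_space_exponential_density[of 1] by simp

lemma exp1_nonneg: "AE t in exp1. 0 \<le> t"
  unfolding exp1_def
  by (subst AE_density) (auto simp: exponential_density_def)

lemma weight_meas:
  assumes f: "f \<in> borel_measurable Q"
  shows "(\<lambda>y. ppr_weight f \<alpha> (fst y) (fst (snd y)) i) \<in> borel_measurable (PiM UNIV (\<lambda>_. Q) \<Otimes>\<^sub>M (PiM UNIV (\<lambda>_. exp1) \<Otimes>\<^sub>M count_space UNIV))"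
proof -
  let ?B = "PiM UNIV (\<lambda>_. Q) \<Otimes>\<^sub>M (PiM UNIV (\<lambda>_. exp1) \<Otimes>\<^sub>M count_space UNIV)"
  have se: "sets exp1 = sets borel" unfolding exp1_def by simp
  have c: "\<And>j. (\<lambda>y. fst (snd y) j) \<in> borel_measurable ?B"
  proof -
    fix j
    have "(\<lambda>y. fst (snd y) j) \<in> measurable ?B exp1" by measurable
    then show "(\<lambda>y. fst (snd y) j) \<in> borel_measurable ?B"
      using measurable_cong_sets[OF refl se] by blast
  qed
  have T: "(\<lambda>y. \<Sum>j\<le>i. fst (snd y) j) \<in> borel_measurable ?B"
    using c by (intro borel_measurable_sum) auto
  have z: "(\<lambda>y. f (fst y i)) \<in> borel_measurable ?B" using f by measurable
  have q: "(\<lambda>y. enn2real (f (fst y i)) / (\<Sum>j\<le>i. fst (snd y) j)) \<in> borel_measurable ?B"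
    using z T by measurable
  show ?thesis unfolding ppr_weight_def ppr_T_def
    using q by (intro powr_real_measurable) auto
qed

lemma dens_meas:
  assumes f: "f \<in> borel_measurable Q"
  shows "(\<lambda>(z, e, k). ennreal (ppr_weight f \<alpha> z e k) / (\<Sum>i. ennreal (ppr_weight f \<alpha> z e i))) \<in> borel_measurable (PiM UNIV (\<lambda>_. Q) \<Otimes>\<^sub>M (PiM UNIV (\<lambda>_. exp1) \<Otimes>\<^sub>M count_space UNIV))"
proof -
  let ?B = "PiM UNIV (\<lambda>_. Q) \<Otimes>\<^sub>M (PiM UNIV (\<lambda>_. exp1) \<Otimes>\<^sub>M count_space UNIV)"
  have w: "\<And>i. (\<lambda>y. ennreal (ppr_weight f \<alpha> (fst y) (fst (snd y)) i)) \<in> borel_measurable ?B"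
    using weight_meas[OF f] by measurable
  have num: "(\<lambda>y. ennreal (ppr_weight f \<alpha> (fst y) (fst (snd y)) (snd (snd y)))) \<in> borel_measurable ?B"
    by (rule measurable_compose_countable'[where g="\<lambda>y. snd (snd y)" and I=UNIV, OF w]) auto
  have den: "(\<lambda>y. \<Sum>i. ennreal (ppr_weight f \<alpha> (fst y) (fst (snd y)) i)) \<in> borel_measurable ?B"
    using w by measurable
  have "(\<lambda>y. ennreal (ppr_weight f \<alpha> (fst y) (fst (snd y)) (snd (snd y))) / (\<Sum>i. ennreal (ppr_weight f \<alpha> (fst y) (fst (snd y)) i))) \<in> borel_measurable ?B"
    using num den by measurable
  then show ?thesis by (simp add: case_prod_beta)
qed
theorem theorem2:
  fixes X :: "'x measure" and Q :: "'z measure" and P :: "'x \<Rightarrow> 'z measure"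
    and N :: "('x \<times> 'x) set" and \<epsilon> \<alpha> :: real
  assumes "prob_space Q"
    and "N \<subseteq> space X \<times> space X" and "sym N"
    and "P \<in> measurable X (prob_algebra Q)"
    and "\<And>x. x \<in> space X \<Longrightarrow> absolutely_continuous Q (P x)"
    and "dp_mech N P \<epsilon> 0"
    and "\<alpha> > 1"
  shows "dp_mech N (\<lambda>x. ppr_mech Q (RN_deriv Q (P x)) \<alpha>) (2 * \<alpha> * \<epsilon>) 0"
proof -
  interpret Q: prob_space Q by fact
  let ?QI = "PiM UNIV (\<lambda>_::nat. Q)" and ?EI = "PiM UNIV (\<lambda>_::nat. exp1)"
  let ?B = "?QI \<Otimes>\<^sub>M (?EI \<Otimes>\<^sub>M count_space (UNIV::nat set))"
  define f where "f x = RN_deriv Q (P x)" for x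
  define g where "g x = (\<lambda>(z, e, k). ennreal (ppr_weight (f x) \<alpha> z e k) / (\<Sum>i. ennreal (ppr_weight (f x) \<alpha> z e i)))" for x
  have fm: "\<And>x. f x \<in> borel_measurable Q" unfolding f_def by simp
  have gm: "\<And>x. g x \<in> borel_measurable ?B" unfolding g_def by (rule dens_meas[OF fm])
  have Pspace: "\<And>x. x \<in> space X \<Longrightarrow> prob_space (P x) \<and> sets (P x) = sets Q"
    using measurable_space[OF assms(4)] by (auto simp: space_prob_algebra)
  have dens: "\<And>x. x \<in> space X \<Longrightarrow> density Q (f x) = P x"
    unfolding f_def using Pspace assms(5) by (intro Q.density_RN_deriv) auto
  have fin: "\<And>x. x \<in> space X \<Longrightarrow> AE z in Q. f x z \<noteq> \<infinity>"
    unfolding f_def using Pspace assms(5)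
    by (intro Q.RN_deriv_finite prob_space_imp_sigma_finite) auto
  have intP: "\<And>x A. x \<in> space X \<Longrightarrow> A \<in> sets Q \<Longrightarrow> emeasure (P x) A = (\<integral>\<^sup>+z. f x z * indicator A z \<partial>Q)"
    using dens fm by (metis emeasure_density)
  have ae_le: "AE z in Q. f x z \<le> ennreal (exp \<epsilon>) * f x' z" if xx: "(x, x') \<in> N" for x x'
  proof -
    have xs: "x \<in> space X" "x' \<in> space X" using assms(2) xx by auto
    show ?thesis
    proof (rule AE_le_of_int_le)
      show "f x \<in> borel_measurable Q" by (rule fm)
      show "(\<lambda>z. ennreal (exp \<epsilon>) * f x' z) \<in> borel_measurable Q" using fm by simp
    next
      fix A assume A: "A \<in> sets Q"
      have "(\<integral>\<^sup>+z. f x z * indicator A z \<partial>Q) = emeasure (P x) A" using intP xs A by simp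
      also have "\<dots> \<le> ennreal (exp \<epsilon>) * emeasure (P x') A"
        using assms(6) xx A Pspace xs unfolding dp_mech_def by fastforce
      also have "\<dots> = (\<integral>\<^sup>+z. (ennreal (exp \<epsilon>) * f x' z) * indicator A z \<partial>Q)"
        using intP xs A fm by (simp add: nn_integral_cmult mult.assoc)
      finally show "(\<integral>\<^sup>+z. f x z * indicator A z \<partial>Q) \<le> (\<integral>\<^sup>+z. (ennreal (exp \<epsilon>) * f x' z) * indicator A z \<partial>Q)" .
    next
      have "integral\<^sup>N Q (\<lambda>z. ennreal (exp \<epsilon>) * f x' z) = ennreal (exp \<epsilon>) * (\<integral>\<^sup>+z. f x' z * indicator (space Q) z \<partial>Q)"
        using fm by (simp add: nn_integral_cmult)
      also have "\<dots> = ennreal (exp \<epsilon>) * emeasure (P x') (space Q)"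
        using intP xs by simp
      also have "\<dots> < \<infinity>"
        using Pspace[OF xs(2)] prob_space.emeasure_space_1[of "P x'"]
        by (simp add: sets_eq_imp_space_eq[of "P x'" Q] ennreal_mult_less_top)
      finally show "integral\<^sup>N Q (\<lambda>z. ennreal (exp \<epsilon>) * f x' z) \<noteq> \<infinity>" by simp
    qed
  qed
  show ?thesis unfolding dp_mech_def
  proof (intro ballI, clarify)
    fix x x' S assume xx: "(x, x') \<in> N" and S: "S \<in> sets (ppr_mech Q (RN_deriv Q (P x)) \<alpha>)"
    have xs: "x \<in> space X" "x' \<in> space X" using assms(2) xx by auto
    have xx': "(x', x) \<in> N" using assms(3) xx by (auto dest: symD)
    define good where "good z \<longleftrightarrow> f x z \<le> ennreal (exp \<epsilon>) * f x' z \<and> f x' z \<le> ennreal (exp \<epsilon>) * f x z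
       \<and> f x z \<noteq> \<infinity> \<and> f x' z \<noteq> \<infinity>" for z
    have AEg: "AE z in Q. good z"
      unfolding good_def using ae_le[OF xx] ae_le[OF xx'] fin[OF xs(1)] fin[OF xs(2)] by eventually_elim auto
    have sfE: "sigma_finite_measure (?EI \<Otimes>\<^sub>M count_space (UNIV::nat set))"
    proof -
      interpret PE: product_prob_space "\<lambda>_::nat. exp1" UNIV
        by (rule product_prob_spaceI) (rule exp1_prob)
      have "prob_space ?EI" by unfold_locales
      then show ?thesis
        by (intro sigma_finite_pair_measure sigma_finite_measure_count_space prob_space_imp_sigma_finite)
    qed
    have AE1: "AE y in ?B. \<forall>i. good (fst y i)"
      by (rule AE_pair_fst[OF sfE AE_PiM_all[OF assms(1) AEg]])
    have AE2: "AE y in ?B. \<forall>j. 0 \<le> fst (snd y) j"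
    proof -
      have "AE w in ?EI \<Otimes>\<^sub>M count_space (UNIV::nat set). \<forall>j. 0 \<le> fst w j"
        by (rule AE_pair_fst[OF sigma_finite_measure_count_space AE_PiM_all[OF exp1_prob exp1_nonneg]])
      then show ?thesis by (rule AE_pair_snd[OF sfE])
    qed
    have pw: "AE y in ?B. g x y \<le> ennreal (exp (2 * \<alpha> * \<epsilon>)) * g x' y"
      using AE1 AE2
    proof eventually_elim
      case (elim y)
      obtain z e k where y: "y = (z, e, k)" by (cases y) auto
      define a where "a i = ppr_weight (f x) \<alpha> z e i" for i
      define b where "b i = ppr_weight (f x') \<alpha> z e i" for i
      have T0: "\<And>i. 0 \<le> ppr_T e i" using elim y unfolding ppr_T_def by (auto intro: sum_nonneg)
      have ab: "ppr_weight (f x) \<alpha> z e i \<le> exp (\<alpha> * \<epsilon>) * ppr_weight (f x') \<alpha> z e i"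
        if fxy: "\<And>i. f x (z i) \<le> ennreal (exp \<epsilon>) * f x' (z i)"
        and fin1: "\<And>i. f x' (z i) \<noteq> \<infinity>" for i x x'
      proof -
        have "enn2real (f x (z i)) \<le> enn2real (ennreal (exp \<epsilon>) * f x' (z i))"
          using fxy[of i] fin1[of i] by (intro enn2real_mono) (auto simp: ennreal_mult_less_top less_top)
        then have u: "enn2real (f x (z i)) \<le> exp \<epsilon> * enn2real (f x' (z i))"
          by (simp add: enn2real_mult)
        have "ppr_weight (f x) \<alpha> z e i \<le> exp \<epsilon> powr \<alpha> * ppr_weight (f x') \<alpha> z e i"
          unfolding ppr_weight_def
          by (rule weight_le[OF T0 _ _ u]) (use assms(7) in auto)
        then show ?thesis by (simp add: powr_def mult.commute)
      qed
      have a0: "\<And>i. 0 \<le> a i" and b0: "\<And>i. 0 \<le> b i" unfolding a_def b_def ppr_weight_def by auto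
      have l1: "\<And>i. a i \<le> exp (\<alpha> * \<epsilon>) * b i"
        unfolding a_def b_def by (rule ab) (use elim y in \<open>auto simp: good_def\<close>)
      have l2: "\<And>i. b i \<le> exp (\<alpha> * \<epsilon>) * a i"
        unfolding a_def b_def by (rule ab) (use elim y in \<open>auto simp: good_def\<close>)
      have "ennreal (a k) / (\<Sum>i. ennreal (a i)) \<le> ennreal (exp (\<alpha> * \<epsilon>) * exp (\<alpha> * \<epsilon>)) * (ennreal (b k) / (\<Sum>i. ennreal (b i)))"
        by (rule ratio_le[OF _ a0 b0 l1 l2]) simp
      then show ?case unfolding y g_def a_def b_def
        by (simp add: exp_add[symmetric] algebra_simps)
    qed
    have sS: "S \<in> sets (?QI \<Otimes>\<^sub>M count_space (UNIV::nat set))" using S unfolding ppr_mech_def by simp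
    have pim: "(\<lambda>(z, e, k). (z, k)) \<in> measurable ?B (?QI \<Otimes>\<^sub>M count_space (UNIV::nat set))" by measurable
    define R where "R = (\<lambda>(z, e, k). (z, k)) -` S \<inter> space ?B"
    have R: "R \<in> sets ?B" unfolding R_def using pim sS by (rule measurable_sets)
    have em: "emeasure (ppr_mech Q (RN_deriv Q (P w)) \<alpha>) S = (\<integral>\<^sup>+y. g w y * indicator R y \<partial>?B)" for w
    proof -
      have "emeasure (ppr_mech Q (RN_deriv Q (P w)) \<alpha>) S = emeasure (density ?B (g w)) R"
        unfolding ppr_mech_def R_def g_def f_def
        by (subst emeasure_distr) (use pim sS in \<open>auto cong: measurable_cong_sets\<close>)
      also have "\<dots> = (\<integral>\<^sup>+y. g w y * indicator R y \<partial>?B)"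
        by (rule emeasure_density[OF gm R])
      finally show ?thesis .
    qed
    have "emeasure (ppr_mech Q (RN_deriv Q (P x)) \<alpha>) S \<le> (\<integral>\<^sup>+y. (ennreal (exp (2 * \<alpha> * \<epsilon>)) * g x' y) * indicator R y \<partial>?B)"
      unfolding em using pw by (intro nn_integral_mono_AE) (auto elim!: eventually_mono split: split_indicator)
    also have "\<dots> = ennreal (exp (2 * \<alpha> * \<epsilon>)) * emeasure (ppr_mech Q (RN_deriv Q (P x')) \<alpha>) S"
      unfolding em using gm R by (simp add: nn_integral_cmult mult.assoc)
    finally show "emeasure (ppr_mech Q (RN_deriv Q (P x)) \<alpha>) S \<le> ennreal (exp (2 * \<alpha> * \<epsilon>)) * emeasure (ppr_mech Q (RN_deriv Q (P x')) \<alpha>) S + ennreal 0"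
      by simp
  qed
qed

end
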